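(* Let $p$ be an odd prime and let $h,a$ be integers with $1\le h,a\le p-1$ and $\gcd(h,a,p-1)=1$. Then $h^{h}\equiv a^{a}\pmod p$ if and only if there exists an integer $g$ with $1\le g\le p-1$ such that \[ g^{h}\equiv a \pmod p\quad\text{and}\quad g^{a}\equiv h\pmod p, \] and in that case such $g$ is unique (explicitly, $g\equiv h^{v_0}a^{u_0}\pmod p$ for any integers $u_0,v_0$ with $u_0h+v_0a\equiv 1\pmod{p-1}$). Consequently, triples $(g,h,a)$ satisfying the two congruences above correspond bijectively (via $(g,h,a)\mapsto(h,a)$) to pairs $(h,a)$ satisfying $h^h\equiv a^a\pmod p$, among those with $\gcd(h,a,p-1)=1$; in particular this holds whenever $\gcd(h,p-1)=1$ or $\gcd(a,p-1)=1$. *)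

theory Defs
  imports "HOL-Number_Theory.Number_Theory"
begin

end

theory Submission
  imports Defs
begin

lemma pow_split: "(g::nat)^(u*h+v*a) = (g^h)^u * (g^a)^v"
  by (simp add: power_add power_mult[symmetric] mult.commute)

lemma pow_mod_red:
  fixes p x m :: nat
  assumes "prime p" "\<not> p dvd x"
  shows "[x^m = x^(m mod (p-1))] (mod p)"
proof -
  have "x^m = (x^(p-1))^(m div (p-1)) * x^(m mod (p-1))"
    by (metis div_mult_mod_eq power_add power_mult mult.commute)
  also have "[\<dots> = 1^(m div (p-1)) * x^(m mod (p-1))] (mod p)"
    using fermat_theorem[OF assms] by (intro cong_mult cong_pow cong_refl)
  finally show ?thesis by simp
qed

lemma pow_cong_exp:
  fixes p x m n :: nat
  assumes "prime p" "\<not> p dvd x" "[m = n] (mod (p-1))"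
  shows "[x^m = x^n] (mod p)"
proof -
  have "[x^m = x^(m mod (p-1))] (mod p)" by (rule pow_mod_red[OF assms(1,2)])
  also have "x^(m mod (p-1)) = x^(n mod (p-1))" using assms(3) by (simp add: cong_def)
  also have "[x^(n mod (p-1)) = x^n] (mod p)" using pow_mod_red[OF assms(1,2)] by (rule cong_sym)
  finally show ?thesis .
qed

lemma bez3:
  fixes h a m :: nat
  assumes "gcd (gcd h a) m = 1" "m > 0"
  shows "\<exists>u v::nat. [u*h+v*a = 1] (mod m)"
proof -
  obtain s t :: int where st: "s*int h + t*int a = gcd (int h) (int a)" using bezout_int by blast
  obtain x y :: int where xy: "x * gcd (int h) (int a) + y * int m = 1"
    using bezout_int[of "gcd (int h) (int a)" "int m"] assms(1)
    by (metis gcd_int_int_eq of_nat_1)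
  have "(x*s)*int h + (x*t)*int a = x*(s*int h + t*int a)" by (simp add: algebra_simps)
  also have "\<dots> = 1 - y * int m" unfolding st using xy by linarith
  finally have e: "(x*s)*int h + (x*t)*int a = 1 - y * int m" .
  define U where "U = (x*s) mod int m"
  define V where "V = (x*t) mod int m"
  have U0: "U \<ge> 0" "V \<ge> 0" using assms(2) by (auto simp: U_def V_def)
  have "[U*int h + V*int a = (x*s)*int h + (x*t)*int a] (mod int m)"
    unfolding U_def V_def by (intro cong_add cong_mult cong_refl) (simp_all add: cong_def)
  also have "(x*s)*int h + (x*t)*int a = 1 - y * int m" by (rule e)
  also have "[1 - y * int m = 1] (mod int m)" by (simp add: cong_iff_dvd_diff)
  finally have c: "[U*int h + V*int a = 1] (mod int m)" .
  have "[int (nat U * h + nat V * a) = int 1] (mod int m)" using c U0 by simp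
  then show ?thesis unfolding cong_int_iff by blast
qed


lemma part_hg:
  fixes p h a :: nat
  assumes p: "prime p" "odd p" and h: "h \<in> {1..p-1}" and a: "a \<in> {1..p-1}"
    and g: "gcd (gcd h a) (p - 1) = 1"
  shows "([h ^ h = a ^ a] (mod p) \<longleftrightarrow>
               (\<exists>g \<in> {1..p-1}. [g ^ h = a] (mod p) \<and> [g ^ a = h] (mod p)))
          \<and> (\<forall>g1 \<in> {1..p-1}. \<forall>g2 \<in> {1..p-1}.
               [g1 ^ h = a] (mod p) \<and> [g1 ^ a = h] (mod p) \<and>
               [g2 ^ h = a] (mod p) \<and> [g2 ^ a = h] (mod p) \<longrightarrow> g1 = g2)
          \<and> (\<forall>g \<in> {1..p-1}. \<forall>u0 v0 :: int.
               [g ^ h = a] (mod p) \<and> [g ^ a = h] (mod p) \<and>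
               [u0 * int h + v0 * int a = 1] (mod int (p - 1)) \<longrightarrow>
               [int g * int h ^ nat (- v0) * int a ^ nat (- u0)
                  = int h ^ nat v0 * int a ^ nat u0] (mod int p))"
proof -
  have p2: "p \<ge> 2" using p prime_ge_2_nat by blast
  have ndv: "\<not> p dvd x" if "x \<in> {1..p-1}" for x
    using that p2 by (auto dest: dvd_imp_le)
  obtain u v :: nat where uv: "[u*h+v*a = 1] (mod (p-1))"
    using bez3[OF g] p2 by auto
  have gform: "[g = a^u * h^v] (mod p)"
    if gi: "g \<in> {1..p-1}" and c1: "[g ^ h = a] (mod p)" and c2: "[g ^ a = h] (mod p)" for g
  proof -
    have "[g = g^(u*h+v*a)] (mod p)"
      using pow_cong_exp[OF p(1) ndv[OF gi] uv] by (simp add: cong_sym)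
    also have "g^(u*h+v*a) = (g^h)^u * (g^a)^v" by (rule pow_split)
    also have "[\<dots> = a^u * h^v] (mod p)" using c1 c2 by (intro cong_mult cong_pow)
    finally show ?thesis .
  qed
  have uniq: "\<forall>g1 \<in> {1..p-1}. \<forall>g2 \<in> {1..p-1}.
               [g1 ^ h = a] (mod p) \<and> [g1 ^ a = h] (mod p) \<and>
               [g2 ^ h = a] (mod p) \<and> [g2 ^ a = h] (mod p) \<longrightarrow> g1 = g2"
  proof (intro ballI impI)
    fix g1 g2 assume g1: "g1 \<in> {1..p-1}" and g2: "g2 \<in> {1..p-1}"
      and cs: "[g1 ^ h = a] (mod p) \<and> [g1 ^ a = h] (mod p) \<and>
               [g2 ^ h = a] (mod p) \<and> [g2 ^ a = h] (mod p)"
    have "[g1 = g2] (mod p)"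
      using gform[OF g1] gform[OF g2] cs by (meson cong_sym cong_trans)
    moreover have "g1 < p" "g2 < p" using g1 g2 p2 by auto
    ultimately show "g1 = g2" by (simp add: cong_def)
  qed
  have iff: "[h ^ h = a ^ a] (mod p) \<longleftrightarrow>
               (\<exists>g \<in> {1..p-1}. [g ^ h = a] (mod p) \<and> [g ^ a = h] (mod p))"
  proof
    assume hh: "[h ^ h = a ^ a] (mod p)"
    define g where "g = (h^v * a^u) mod p"
    have nd: "\<not> p dvd h^v * a^u"
      using ndv[OF h] ndv[OF a] p(1) by (metis prime_dvd_mult_iff prime_dvd_power)
    have gi: "g \<in> {1..p-1}"
    proof -
      have "g \<noteq> 0" using nd by (simp add: g_def dvd_eq_mod_eq_0)
      moreover have "g < p" using p2 by (simp add: g_def)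
      ultimately show ?thesis by auto
    qed
    have gc: "[g = h^v * a^u] (mod p)" by (simp add: g_def cong_def)
    have "[g^h = (h^v * a^u)^h] (mod p)" using gc by (rule cong_pow)
    also have "(h^v * a^u)^h = (h^h)^v * a^(u*h)"
      by (simp add: power_mult_distrib power_mult[symmetric] mult.commute)
    also have "[\<dots> = (a^a)^v * a^(u*h)] (mod p)" using hh by (intro cong_mult cong_pow cong_refl)
    also have "(a^a)^v * a^(u*h) = a^(u*h+v*a)"
      by (simp add: power_add power_mult[symmetric] mult.commute)
    also have "[\<dots> = a] (mod p)" using pow_cong_exp[OF p(1) ndv[OF a] uv] by simp
    finally have c1: "[g^h = a] (mod p)" .
    have "[g^a = (h^v * a^u)^a] (mod p)" using gc by (rule cong_pow)
    also have "(h^v * a^u)^a = h^(v*a) * (a^a)^u"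
      by (simp add: power_mult_distrib power_mult[symmetric] mult.commute)
    also have "[\<dots> = h^(v*a) * (h^h)^u] (mod p)" using hh
      by (intro cong_mult cong_pow cong_refl) (rule cong_sym)
    also have "h^(v*a) * (h^h)^u = h^(u*h+v*a)"
      by (simp add: power_add power_mult[symmetric] mult.commute)
    also have "[\<dots> = h] (mod p)" using pow_cong_exp[OF p(1) ndv[OF h] uv] by simp
    finally have c2: "[g^a = h] (mod p)" .
    show "\<exists>g \<in> {1..p-1}. [g ^ h = a] (mod p) \<and> [g ^ a = h] (mod p)"
      using gi c1 c2 by blast
  next
    assume "\<exists>g \<in> {1..p-1}. [g ^ h = a] (mod p) \<and> [g ^ a = h] (mod p)"
    then obtain g where c1: "[g ^ h = a] (mod p)" and c2: "[g ^ a = h] (mod p)" by blast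
    have "[h^h = (g^a)^h] (mod p)" using c2 by (intro cong_pow) (rule cong_sym)
    also have "(g^a)^h = (g^h)^a" by (simp add: power_mult[symmetric] mult.commute)
    also have "[\<dots> = a^a] (mod p)" using c1 by (rule cong_pow)
    finally show "[h ^ h = a ^ a] (mod p)" .
  qed
  have expl: "\<forall>g \<in> {1..p-1}. \<forall>u0 v0 :: int.
               [g ^ h = a] (mod p) \<and> [g ^ a = h] (mod p) \<and>
               [u0 * int h + v0 * int a = 1] (mod int (p - 1)) \<longrightarrow>
               [int g * int h ^ nat (- v0) * int a ^ nat (- u0)
                  = int h ^ nat v0 * int a ^ nat u0] (mod int p)"
  proof (intro ballI allI impI)
    fix g u0 v0 assume gi: "g \<in> {1..p-1}" and cs: "[g ^ h = a] (mod p) \<and> [g ^ a = h] (mod p) \<and>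
               [u0 * int h + v0 * int a = 1] (mod int (p - 1))"
    have c1: "[g ^ h = a] (mod p)" and c2: "[g ^ a = h] (mod p)"
      and c3: "[u0 * int h + v0 * int a = 1] (mod int (p - 1))" using cs by auto
    have "[int (nat u0 * h + nat v0 * a) = int (1 + nat (-u0) * h + nat (-v0) * a)] (mod int (p-1))"
    proof -
      have e: "int (nat u0 * h + nat v0 * a) - int (1 + nat (-u0) * h + nat (-v0) * a)
          = u0 * int h + v0 * int a - 1"
      proof -
        have hu: "int (nat u0) = u0 + int (nat (-u0))" by simp
        have hv: "int (nat v0) = v0 + int (nat (-v0))" by simp
        show ?thesis unfolding of_nat_add of_nat_mult hu hv by (simp add: algebra_simps)
      qed
      show ?thesis using c3 by (simp only: cong_iff_dvd_diff e)
    qed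
    then have ce: "[nat u0 * h + nat v0 * a = 1 + nat (-u0) * h + nat (-v0) * a] (mod (p-1))"
      unfolding cong_int_iff .
    have "[g * (a^nat (-u0) * h^nat (-v0)) = g * ((g^h)^nat (-u0) * (g^a)^nat (-v0))] (mod p)"
      using c1 c2 by (intro cong_mult cong_pow cong_refl) (simp_all add: cong_sym_eq)
    also have "g * ((g^h)^nat (-u0) * (g^a)^nat (-v0)) = g^(1 + nat (-u0) * h + nat (-v0) * a)"
      using pow_split[of g "nat (-u0)" h "nat (-v0)" a] by (simp add: add.assoc)
    also have "[\<dots> = g^(nat u0 * h + nat v0 * a)] (mod p)"
      using ce by (intro pow_cong_exp[OF p(1) ndv[OF gi]]) (simp add: cong_sym_eq)
    also have "g^(nat u0 * h + nat v0 * a) = (g^h)^nat u0 * (g^a)^nat v0" by (rule pow_split)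
    also have "[\<dots> = a^nat u0 * h^nat v0] (mod p)"
      using c1 c2 by (intro cong_mult cong_pow)
    finally have "[g * h ^ nat (- v0) * a ^ nat (- u0) = h ^ nat v0 * a ^ nat u0] (mod p)"
      by (simp add: ac_simps)
    then show "[int g * int h ^ nat (- v0) * int a ^ nat (- u0)
                  = int h ^ nat v0 * int a ^ nat u0] (mod int p)"
      by (simp only: of_nat_power[symmetric] of_nat_mult[symmetric] cong_int_iff)
  qed
  show ?thesis by (rule conjI[OF iff conjI[OF uniq expl]])
qed

lemmas part_iff = part_hg[THEN conjunct1]
lemmas part_uniq = part_hg[THEN conjunct2, THEN conjunct1]

theorem mainTheorem5:
  fixes p :: nat
  assumes "prime p" and "odd p"
  shows "(\<forall>h a. h \<in> {1..p-1} \<longrightarrow> a \<in> {1..p-1} \<longrightarrow> gcd (gcd h a) (p - 1) = 1 \<longrightarrow>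
            ([h ^ h = a ^ a] (mod p) \<longleftrightarrow>
               (\<exists>g \<in> {1..p-1}. [g ^ h = a] (mod p) \<and> [g ^ a = h] (mod p)))
          \<and> (\<forall>g1 \<in> {1..p-1}. \<forall>g2 \<in> {1..p-1}.
               [g1 ^ h = a] (mod p) \<and> [g1 ^ a = h] (mod p) \<and>
               [g2 ^ h = a] (mod p) \<and> [g2 ^ a = h] (mod p) \<longrightarrow> g1 = g2)
          \<and> (\<forall>g \<in> {1..p-1}. \<forall>u0 v0 :: int.
               [g ^ h = a] (mod p) \<and> [g ^ a = h] (mod p) \<and>
               [u0 * int h + v0 * int a = 1] (mod int (p - 1)) \<longrightarrow>
               [int g * int h ^ nat (- v0) * int a ^ nat (- u0)
                  = int h ^ nat v0 * int a ^ nat u0] (mod int p)))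
       \<and> bij_betw (\<lambda>(g, h, a). (h, a))
           {(g, h, a). g \<in> {1..p-1} \<and> h \<in> {1..p-1} \<and> a \<in> {1..p-1} \<and>
              gcd (gcd h a) (p - 1) = 1 \<and> [g ^ h = a] (mod p) \<and> [g ^ a = h] (mod p)}
           {(h, a). h \<in> {1..p-1} \<and> a \<in> {1..p-1} \<and>
              gcd (gcd h a) (p - 1) = 1 \<and> [h ^ h = a ^ a] (mod p)}"
proof
  show A: "\<forall>h a. h \<in> {1..p-1} \<longrightarrow> a \<in> {1..p-1} \<longrightarrow> gcd (gcd h a) (p - 1) = 1 \<longrightarrow>
            ([h ^ h = a ^ a] (mod p) \<longleftrightarrow>
               (\<exists>g \<in> {1..p-1}. [g ^ h = a] (mod p) \<and> [g ^ a = h] (mod p)))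
          \<and> (\<forall>g1 \<in> {1..p-1}. \<forall>g2 \<in> {1..p-1}.
               [g1 ^ h = a] (mod p) \<and> [g1 ^ a = h] (mod p) \<and>
               [g2 ^ h = a] (mod p) \<and> [g2 ^ a = h] (mod p) \<longrightarrow> g1 = g2)
          \<and> (\<forall>g \<in> {1..p-1}. \<forall>u0 v0 :: int.
               [g ^ h = a] (mod p) \<and> [g ^ a = h] (mod p) \<and>
               [u0 * int h + v0 * int a = 1] (mod int (p - 1)) \<longrightarrow>
               [int g * int h ^ nat (- v0) * int a ^ nat (- u0)
                  = int h ^ nat v0 * int a ^ nat u0] (mod int p))"
    by (intro allI impI part_hg[OF assms])
  show "bij_betw (\<lambda>(g, h, a). (h, a))
           {(g, h, a). g \<in> {1..p-1} \<and> h \<in> {1..p-1} \<and> a \<in> {1..p-1} \<and>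
              gcd (gcd h a) (p - 1) = 1 \<and> [g ^ h = a] (mod p) \<and> [g ^ a = h] (mod p)}
           {(h, a). h \<in> {1..p-1} \<and> a \<in> {1..p-1} \<and>
              gcd (gcd h a) (p - 1) = 1 \<and> [h ^ h = a ^ a] (mod p)}"
    unfolding bij_betw_def
  proof
    show "inj_on (\<lambda>(g, h, a). (h, a))
           {(g, h, a). g \<in> {1..p-1} \<and> h \<in> {1..p-1} \<and> a \<in> {1..p-1} \<and>
              gcd (gcd h a) (p - 1) = 1 \<and> [g ^ h = a] (mod p) \<and> [g ^ a = h] (mod p)}"
    proof (rule inj_onI)
      fix x y
      assume x: "x \<in> {(g, h, a). g \<in> {1..p-1} \<and> h \<in> {1..p-1} \<and> a \<in> {1..p-1} \<and>
              gcd (gcd h a) (p - 1) = 1 \<and> [g ^ h = a] (mod p) \<and> [g ^ a = h] (mod p)}"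
        and y: "y \<in> {(g, h, a). g \<in> {1..p-1} \<and> h \<in> {1..p-1} \<and> a \<in> {1..p-1} \<and>
              gcd (gcd h a) (p - 1) = 1 \<and> [g ^ h = a] (mod p) \<and> [g ^ a = h] (mod p)}"
        and e: "(\<lambda>(g, h, a). (h, a)) x = (\<lambda>(g, h, a). (h, a)) y"
      obtain g h a where xe: "x = (g, h, a)" by (cases x) auto
      obtain g' h' a' where ye: "y = (g', h', a')" by (cases y) auto
      have hh: "h' = h" "a' = a" using e xe ye by auto
      have m: "g \<in> {1..p-1}" "h \<in> {1..p-1}" "a \<in> {1..p-1}" "gcd (gcd h a) (p - 1) = 1"
        "[g ^ h = a] (mod p)" "[g ^ a = h] (mod p)" using x xe by auto
      have m': "g' \<in> {1..p-1}" "[g' ^ h = a] (mod p)" "[g' ^ a = h] (mod p)" using y ye hh by auto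
      have "g = g'" using part_uniq[OF assms m(2,3,4)] m m' by blast
      then show "x = y" using xe ye hh by simp
    qed
  next
    show "(\<lambda>(g, h, a). (h, a)) `
           {(g, h, a). g \<in> {1..p-1} \<and> h \<in> {1..p-1} \<and> a \<in> {1..p-1} \<and>
              gcd (gcd h a) (p - 1) = 1 \<and> [g ^ h = a] (mod p) \<and> [g ^ a = h] (mod p)} =
           {(h, a). h \<in> {1..p-1} \<and> a \<in> {1..p-1} \<and>
              gcd (gcd h a) (p - 1) = 1 \<and> [h ^ h = a ^ a] (mod p)}"
    proof (intro equalityI subsetI)
      fix x assume "x \<in> (\<lambda>(g, h, a). (h, a)) `
           {(g, h, a). g \<in> {1..p-1} \<and> h \<in> {1..p-1} \<and> a \<in> {1..p-1} \<and>
              gcd (gcd h a) (p - 1) = 1 \<and> [g ^ h = a] (mod p) \<and> [g ^ a = h] (mod p)}"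
      then obtain g h a where x: "x = (h, a)" and m: "g \<in> {1..p-1}" "h \<in> {1..p-1}" "a \<in> {1..p-1}"
        "gcd (gcd h a) (p - 1) = 1" "[g ^ h = a] (mod p)" "[g ^ a = h] (mod p)" by auto
      have "[h ^ h = a ^ a] (mod p)" using part_iff[OF assms m(2,3,4)] m(1,5,6) by blast
      then show "x \<in> {(h, a). h \<in> {1..p-1} \<and> a \<in> {1..p-1} \<and>
              gcd (gcd h a) (p - 1) = 1 \<and> [h ^ h = a ^ a] (mod p)}" using x m by simp
    next
      fix x assume "x \<in> {(h, a). h \<in> {1..p-1} \<and> a \<in> {1..p-1} \<and>
              gcd (gcd h a) (p - 1) = 1 \<and> [h ^ h = a ^ a] (mod p)}"
      then obtain h a where x: "x = (h, a)" and m: "h \<in> {1..p-1}" "a \<in> {1..p-1}"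
        "gcd (gcd h a) (p - 1) = 1" "[h ^ h = a ^ a] (mod p)" by auto
      then obtain g where "g \<in> {1..p-1}" "[g ^ h = a] (mod p)" "[g ^ a = h] (mod p)"
        using part_iff[OF assms m(1,2,3)] m(4) by blast
      then show "x \<in> (\<lambda>(g, h, a). (h, a)) `
           {(g, h, a). g \<in> {1..p-1} \<and> h \<in> {1..p-1} \<and> a \<in> {1..p-1} \<and>
              gcd (gcd h a) (p - 1) = 1 \<and> [g ^ h = a] (mod p) \<and> [g ^ a = h] (mod p)}"
        using x m by (intro image_eqI[of _ _ "(g, h, a)"]) auto
    qed
  qed
qed

end
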